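(* Let $D_\infty=\langle s,t\mid t^2,\ tsts\rangle$ with word metric $d(g_1,g_2)=|g_2g_1^{-1}|_S$ for $S=\{s^{\pm1},t\}$. Let $\alpha,\beta$ be minimal continuous actions of $D_\infty$ on an infinite compact Hausdorff space $X$, and suppose they are continuously orbit equivalent via a homeomorphism $\phi:X\to X$ and continuous cocycle $c:D_\infty\times X\to D_\infty$ with $\phi(\alpha_g x)=\beta_{c(g,x)}(\phi(x))$ for all $g,x$. Define $X_+=\{x\in X: \sup_{n\in\mathbb{Z}} d(c(s^n,x),s^n)<\infty\}$ and $X_-=\{x\in X: \sup_{n\in\mathbb{Z}} d(c(s^n,x),s^{-n})<\infty\}$. Then $X=X_+\sqcup X_-$ and both $X_+$ and $X_-$ are clopen in $X$.
   Context: Continuous orbit equivalence of two actions of $D_\infty$ on $X$: a homeomorphism $\phi:X\to X$ with inverse $\psi$ and continuous maps $a,b:D_\infty\times X\to D_\infty$ with $\phi(\alpha_g x)=\beta_{a(g,x)}\phi(x)$ and $\psi(\beta_h y)=\alpha_{b(h,y)}\psi(y)$; since the actions are topologically free, $a=c$ is a cocycle, i.e. $c(g_1g_2,x)=c(g_1,\alpha_{g_2}x)c(g_2,x)$. *)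

theory Defs
  imports "HOL-Analysis.Analysis"
begin

text \<open>The infinite dihedral group D_inf = <s,t | t^2, tsts>, realised concretely:
  DI n e stands for the normal form s^n t^e (e = True meaning one factor t).\<close>
datatype dinf = DI int bool

fun dmult :: "dinf \<Rightarrow> dinf \<Rightarrow> dinf" where
  "dmult (DI m a) (DI n b) = DI (m + (if a then - n else n)) (a \<noteq> b)"

fun dinv :: "dinf \<Rightarrow> dinf" where
  "dinv (DI m a) = (if a then DI m a else DI (- m) False)"

definition dunit :: dinf where "dunit = DI 0 False"
definition gen_s :: dinf where "gen_s = DI 1 False"
definition gen_t :: dinf where "gen_t = DI 0 True"

definition dzpow :: "dinf \<Rightarrow> int \<Rightarrow> dinf" where
  "dzpow g n = (if 0 \<le> n then (dmult g ^^ nat n) dunit else (dmult (dinv g) ^^ nat (- n)) dunit)"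

definition word_len :: "dinf \<Rightarrow> nat" where
  "word_len g = (LEAST k. \<exists>w. length w = k \<and> set w \<subseteq> {gen_s, dinv gen_s, gen_t}
                               \<and> foldr dmult w dunit = g)"

definition word_dist :: "dinf \<Rightarrow> dinf \<Rightarrow> nat" where
  "word_dist g1 g2 = word_len (dmult g2 (dinv g1))"

definition cont_action :: "(dinf \<Rightarrow> 'a::topological_space \<Rightarrow> 'a) \<Rightarrow> bool" where
  "cont_action \<alpha> \<longleftrightarrow> \<alpha> dunit = id \<and> (\<forall>g h. \<alpha> (dmult g h) = \<alpha> g \<circ> \<alpha> h)
      \<and> (\<forall>g. continuous_on UNIV (\<alpha> g))"

definition minimal_action :: "(dinf \<Rightarrow> 'a::topological_space \<Rightarrow> 'a) \<Rightarrow> bool" where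
  "minimal_action \<alpha> \<longleftrightarrow> (\<forall>x. closure (range (\<lambda>g. \<alpha> g x)) = UNIV)"

text \<open>Continuity of a map X \<rightarrow> D_inf (D_inf discrete) = local constancy.\<close>
definition cont_to_dinf :: "('a::topological_space \<Rightarrow> dinf) \<Rightarrow> bool" where
  "cont_to_dinf f \<longleftrightarrow> (\<forall>x. \<exists>U. open U \<and> x \<in> U \<and> (\<forall>y\<in>U. f y = f x))"

end

theory Submission
  imports Defs
begin


fun sig :: "dinf \<Rightarrow> int" where "sig (DI m a) = (if a then - m else m)"
fun tb :: "dinf \<Rightarrow> bool" where "tb (DI m a) = a"
fun sx :: "dinf \<Rightarrow> int" where "sx (DI m a) = m"

lemma dmult_assoc: "dmult (dmult x y) z = dmult x (dmult y z)"
  by (cases x; cases y; cases z) auto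

lemma dmult_unit_left[simp]: "dmult dunit x = x"
  by (cases x) (auto simp: dunit_def)
lemma dmult_unit_right[simp]: "dmult x dunit = x"
  by (cases x) (auto simp: dunit_def)
lemma dinv_left[simp]: "dmult (dinv x) x = dunit"
  by (cases x) (auto simp: dunit_def)
lemma dinv_right[simp]: "dmult x (dinv x) = dunit"
  by (cases x) (auto simp: dunit_def)

lemma pow_s_nat: "(dmult gen_s ^^ k) dunit = DI (int k) False"
  by (induction k) (auto simp: gen_s_def dunit_def)
lemma pow_sinv_nat: "(dmult (dinv gen_s) ^^ k) dunit = DI (- int k) False"
  by (induction k) (auto simp: gen_s_def dunit_def)

lemma dzpow_s[simp]: "dzpow gen_s n = DI n False"
  by (auto simp: dzpow_def pow_s_nat pow_sinv_nat)

lemma foldr_rep: "(dmult (DI e False) ^^ k) (DI j a) = DI (int k * e + j) a"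
  by (induction k) (auto simp: algebra_simps)

lemma word_lower: "set w \<subseteq> {gen_s, dinv gen_s, gen_t} \<Longrightarrow> foldr dmult w dunit = DI m a
   \<Longrightarrow> nat \<bar>m\<bar> + (if a then 1 else 0) \<le> length w"
proof (induction w arbitrary: m a)
  case Nil then show ?case by (auto simp: dunit_def)
next
  case (Cons g w)
  obtain m' a' where f: "foldr dmult w dunit = DI m' a'" by (cases "foldr dmult w dunit") auto
  have ih: "nat \<bar>m'\<bar> + (if a' then 1 else 0) \<le> length w" using Cons f by auto
  have "g = DI 1 False \<or> g = DI (-1) False \<or> g = DI 0 True"
    using Cons.prems(1) by (auto simp: gen_s_def gen_t_def)
  then show ?case using Cons.prems(2) f ih by (auto split: if_splits)
qed

lemma word_len_DI: "word_len (DI m a) = nat \<bar>m\<bar> + (if a then 1 else 0)"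
  unfolding word_len_def
proof (rule Least_equality)
  define w where "w = replicate (nat \<bar>m\<bar>) (DI (sgn m) False) @ (if a then [gen_t] else [])"
  have "set w \<subseteq> {gen_s, dinv gen_s, gen_t}"
    by (auto simp: w_def gen_s_def gen_t_def sgn_if)
  moreover have "foldr dmult w dunit = DI m a"
    by (auto simp: w_def foldr_rep gen_t_def dunit_def abs_mult_sgn)
  moreover have "length w = nat \<bar>m\<bar> + (if a then 1 else 0)" by (auto simp: w_def)
  ultimately show "\<exists>w. length w = nat \<bar>m\<bar> + (if a then 1 else 0) \<and> set w \<subseteq> {gen_s, dinv gen_s, gen_t}
                               \<and> foldr dmult w dunit = DI m a" by blast
next
  fix y assume "\<exists>w. length w = y \<and> set w \<subseteq> {gen_s, dinv gen_s, gen_t} \<and> foldr dmult w dunit = DI m a"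
  then show "nat \<bar>m\<bar> + (if a then 1 else 0) \<le> y" using word_lower by blast
qed

lemma word_dist_s: "word_dist g (DI n False) = nat \<bar>n - sig g\<bar> + (if tb g then 1 else 0)"
  by (cases g) (auto simp: word_dist_def word_len_DI)

lemma sig_dmult: "\<bar>sig (dmult k h) - sig h\<bar> \<le> \<bar>sx k\<bar>"
  by (cases k; cases h) auto

lemma sig_DI_F[simp]: "sig (DI n False) = n" by simp
lemma sig_DI_T: "sig (DI (- n) True) = n" by simp

lemma sig_eq_iff: "sig h = m \<longleftrightarrow> h = DI m False \<or> h = DI (- m) True"
  by (cases h) auto




definition cnt :: "(int\<Rightarrow>int) \<Rightarrow> (int\<Rightarrow>int) \<Rightarrow> bool" where
 "cnt p q \<longleftrightarrow> (\<forall>a b. finite {n. p n \<in> {a..b}} \<and> finite {n. q n \<in> {a..b}} \<and>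
     card {n. p n \<in> {a..b}} + card {n. q n \<in> {a..b}} = 2 * card {a..b})"

lemma cnt_neg: assumes "cnt p q" shows "cnt (\<lambda>n. - p n) (\<lambda>n. - q n)"
  unfolding cnt_def
proof (intro allI)
  fix a b :: int
  have e1: "{n. - p n \<in> {a..b}} = {n. p n \<in> {-b..-a}}" by auto
  have e2: "{n. - q n \<in> {a..b}} = {n. q n \<in> {-b..-a}}" by auto
  have "card {-b..-a} = card {a..b}" by simp
  then show "finite {n. - p n \<in> {a..b}} \<and> finite {n. - q n \<in> {a..b}} \<and>
     card {n. - p n \<in> {a..b}} + card {n. - q n \<in> {a..b}} = 2 * card {a..b}"
    using assms unfolding cnt_def e1 e2 by metis
qed

lemma cnt_refl: assumes "cnt p q" shows "cnt (\<lambda>n. - p (- n)) (\<lambda>n. - q (- n))"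
  unfolding cnt_def
proof (intro allI)
  fix a b :: int
  have e1: "{n. - p (- n) \<in> {a..b}} = uminus ` {n. p n \<in> {-b..-a}}"
    apply (auto simp: image_iff) subgoal for x by (rule exI[of _ "- x"]) auto done
  have e2: "{n. - q (- n) \<in> {a..b}} = uminus ` {n. q n \<in> {-b..-a}}"
    apply (auto simp: image_iff) subgoal for x by (rule exI[of _ "- x"]) auto done
  have i: "inj (uminus :: int \<Rightarrow> int)" by (simp add: inj_def)
  have "card {-b..-a} = card {a..b}" by simp
  then show "finite {n. - p (- n) \<in> {a..b}} \<and> finite {n. - q (- n) \<in> {a..b}} \<and>
     card {n. - p (- n) \<in> {a..b}} + card {n. - q (- n) \<in> {a..b}} = 2 * card {a..b}"
    using assms unfolding cnt_def e1 e2 card_image[OF inj_on_subset[OF i subset_UNIV]]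
    by (metis finite_imageI)
qed

lemma half:
  fixes p q :: "int \<Rightarrow> int"
  assumes K: "K \<ge> 0"
    and P1: "\<forall>n. \<bar>p (n+1) - p n\<bar> \<le> K"
    and P3: "\<forall>n. \<bar>q n - p n\<bar> \<le> K"
    and C: "cnt p q"
    and A: "A > 0" and D: "\<forall>n. p (n+A) - p n > K"
    and n: "n \<ge> 0"
  shows "\<bar>p n - p 0 - n\<bar> \<le> 2*K*A + 2*K + 2"
proof -
  have step1: "p (m + int j) \<ge> p m - K * int j" for m j
  proof (induction j)
    case 0 then show ?case by simp
  next
    case (Suc j)
    have "\<bar>p (m + int j + 1) - p (m + int j)\<bar> \<le> K" using P1 by blast
    then show ?case using Suc by (simp add: algebra_simps)
  qed
  have mono0: "p (m + int j) \<ge> p m - K * A" for m j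
  proof (induction j rule: less_induct)
    case (less j)
    show ?case
    proof (cases "int j < A")
      case True
      then have "K * int j \<le> K * A" using K by (intro mult_left_mono) auto
      then show ?thesis using step1[of m j] by linarith
    next
      case False
      define j' where "j' = j - nat A"
      have jj: "int j = int j' + A" "j' < j" using False A by (auto simp: j'_def)
      have "p (m + int j) = p ((m + int j') + A)" using jj by (simp add: algebra_simps)
      moreover have "p ((m + int j') + A) - p (m + int j') > K" using D by blast
      ultimately show ?thesis using less[OF jj(2)] K by linarith
    qed
  qed
  have mono: "m \<le> m' \<Longrightarrow> p m' \<ge> p m - K * A" for m m'
    using mono0[of m "nat (m' - m)"] by simp
  define E where "E = K * A"
  have fin: "finite {m. p m \<in> {a..b}}" "finite {m. q m \<in> {a..b}}"
     and cd: "card {m. p m \<in> {a..b}} + card {m. q m \<in> {a..b}} = 2 * card {a..b}" for a b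
    using C unfolding cnt_def by blast+
  define I where "I = {p 0 - E - K .. p n + E + K}"
  have s1: "{0..n} \<subseteq> {m. p m \<in> I}"
  proof
    fix m assume m: "m \<in> {0..n}"
    have "p m \<ge> p 0 - E" using mono[of 0 m] m by (auto simp: E_def)
    moreover have "p n \<ge> p m - E" using mono[of m n] m by (auto simp: E_def)
    ultimately show "m \<in> {m. p m \<in> I}" using K unfolding I_def by auto
  qed
  have s2: "{0..n} \<subseteq> {m. q m \<in> I}"
  proof
    fix m assume m: "m \<in> {0..n}"
    have "p m \<ge> p 0 - E" using mono[of 0 m] m by (auto simp: E_def)
    moreover have "p n \<ge> p m - E" using mono[of m n] m by (auto simp: E_def)
    moreover have "\<bar>q m - p m\<bar> \<le> K" using P3 by blast
    ultimately show "m \<in> {m. q m \<in> I}" unfolding I_def by auto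
  qed
  have "card {0..n} \<le> card {m. p m \<in> I}" using s1 fin unfolding I_def by (intro card_mono) auto
  moreover have "card {0..n} \<le> card {m. q m \<in> I}" using s2 fin unfolding I_def by (intro card_mono) auto
  ultimately have "2 * card {0..n} \<le> 2 * card I" using cd[of "p 0 - E - K" "p n + E + K"] unfolding I_def by linarith
  then have u: "n + 1 \<le> p n - p 0 + 2*E + 2*K + 1" using n unfolding I_def by auto
  define J where "J = {p 0 + E + K + 1 .. p n - E - K - 1}"
  have t1: "{m. p m \<in> J} \<subseteq> {0..n}"
  proof
    fix m assume m: "m \<in> {m. p m \<in> J}"
    show "m \<in> {0..n}"
    proof (rule ccontr)
      assume "m \<notin> {0..n}"
      then consider "m < 0" | "m > n" by auto
      then show False
      proof cases
        case 1 then have "p 0 \<ge> p m - E" using mono[of m 0] by (auto simp: E_def)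
        then show False using m K unfolding J_def by auto
      next
        case 2 then have "p m \<ge> p n - E" using mono[of n m] by (auto simp: E_def)
        then show False using m K unfolding J_def by auto
      qed
    qed
  qed
  have t2: "{m. q m \<in> J} \<subseteq> {0..n}"
  proof
    fix m assume m: "m \<in> {m. q m \<in> J}"
    have qp: "\<bar>q m - p m\<bar> \<le> K" using P3 by blast
    show "m \<in> {0..n}"
    proof (rule ccontr)
      assume "m \<notin> {0..n}"
      then consider "m < 0" | "m > n" by auto
      then show False
      proof cases
        case 1 then have "p 0 \<ge> p m - E" using mono[of m 0] by (auto simp: E_def)
        then show False using m qp unfolding J_def by auto
      next
        case 2 then have "p m \<ge> p n - E" using mono[of n m] by (auto simp: E_def)
        then show False using m qp unfolding J_def by auto
      qed
    qed
  qed
  have "card {m. p m \<in> J} \<le> card {0..n}" using t1 by (intro card_mono) auto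
  moreover have "card {m. q m \<in> J} \<le> card {0..n}" using t2 by (intro card_mono) auto
  ultimately have "2 * card J \<le> 2 * card {0..n}" using cd[of "p 0 + E + K + 1" "p n - E - K - 1"] unfolding J_def by linarith
  then have l: "p n - p 0 - 2*E - 2*K - 1 \<le> n + 1" using n unfolding J_def by auto
  show ?thesis using u l unfolding E_def by (simp add: algebra_simps)
qed

lemma incr:
  fixes p q :: "int \<Rightarrow> int"
  assumes K: "K \<ge> 0"
    and P1: "\<forall>n. \<bar>p (n+1) - p n\<bar> \<le> K"
    and P3: "\<forall>n. \<bar>q n - p n\<bar> \<le> K"
    and C: "cnt p q"
    and A: "A > 0" and D: "\<forall>n. p (n+A) - p n > K"
  shows "\<bar>p n - p 0 - n\<bar> \<le> 2*K*A + 2*K + 2"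
proof (cases "n \<ge> 0")
  case True then show ?thesis using half[OF assms] by blast
next
  case False
  define p' where "p' = (\<lambda>n. - p (- n))"
  define q' where "q' = (\<lambda>n. - q (- n))"
  have P1': "\<forall>n. \<bar>p' (n+1) - p' n\<bar> \<le> K"
  proof
    fix n have "\<bar>p ((- n - 1) + 1) - p (- n - 1)\<bar> \<le> K" using P1 by blast
    then show "\<bar>p' (n+1) - p' n\<bar> \<le> K" by (simp add: p'_def)
  qed
  have P3': "\<forall>n. \<bar>q' n - p' n\<bar> \<le> K" using P3 by (auto simp: p'_def q'_def abs_minus_commute)
  have C': "cnt p' q'" using cnt_refl[OF C] by (simp add: p'_def q'_def)
  have D': "\<forall>n. p' (n+A) - p' n > K"
  proof
    fix n have "p ((- n - A) + A) - p (- n - A) > K" using D by blast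
    then show "p' (n+A) - p' n > K" by (simp add: p'_def)
  qed
  have "\<bar>p' (- n) - p' 0 - (- n)\<bar> \<le> 2*K*A + 2*K + 2"
    using half[OF K P1' P3' C' A D', of "- n"] False by auto
  then show ?thesis by (simp add: p'_def)
qed

definition CK :: "int \<Rightarrow> int" where "CK K = 2*K*(K*(K+2)+1) + 2*K + 2"

lemma core_int:
  fixes p q :: "int \<Rightarrow> int"
  assumes K: "K \<ge> 0"
    and P1: "\<forall>n. \<bar>p (n+1) - p n\<bar> \<le> K"
    and P2: "\<forall>n m. \<bar>n - m\<bar> \<le> K * (\<bar>p n - p m\<bar> + 2)"
    and P3: "\<forall>n. \<bar>q n - p n\<bar> \<le> K"
    and C: "cnt p q"
  shows "(\<forall>n. \<bar>p n - p 0 - n\<bar> \<le> CK K) \<or> (\<forall>n. \<bar>p n - p 0 + n\<bar> \<le> CK K)"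
proof -
  define A where "A = K*(K+2)+1"
  have A: "A > 0" using K by (simp add: A_def add_pos_nonneg)
  have big: "\<bar>p (n+A) - p n\<bar> > K" for n
  proof (rule ccontr)
    assume "\<not> ?thesis"
    then have "\<bar>p (n+A) - p n\<bar> + 2 \<le> K + 2" by simp
    then have "K * (\<bar>p (n+A) - p n\<bar> + 2) \<le> K * (K+2)" using K by (intro mult_left_mono) auto
    moreover have "\<bar>(n+A) - n\<bar> \<le> K * (\<bar>p (n+A) - p n\<bar> + 2)" using P2 by blast
    ultimately show False using A by (simp add: A_def)
  qed
  have sw: "p (n+A) - p n > K \<longleftrightarrow> p (n+1+A) - p (n+1) > K" for n
  proof -
    have a: "\<bar>p (n+1) - p n\<bar> \<le> K" using P1 by blast
    have b: "\<bar>p (n+A+1) - p (n+A)\<bar> \<le> K" using P1 by blast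
    have c: "n+1+A = n+A+1" by simp
    show ?thesis using big[of n] big[of "n+1"] a b unfolding c by linarith
  qed
  have all: "p (n+A) - p n > K \<longleftrightarrow> p (0+A) - p 0 > K" for n
  proof (induction n rule: int_induct[of _ 0])
    case base then show ?case by simp
  next
    case (step1 i) then show ?case using sw[of i] by simp
  next
    case (step2 i) then show ?case using sw[of "i - 1"] by simp
  qed
  show ?thesis
  proof (cases "p (0+A) - p 0 > K")
    case True
    then have D: "\<forall>n. p (n+A) - p n > K" using all by blast
    show ?thesis using incr[OF K P1 P3 C A D] by (simp add: CK_def A_def)
  next
    case False
    then have D: "\<forall>n. (- p (n+A)) - (- p n) > K" using all big by (metis abs_if minus_diff_eq not_less_iff_gr_or_eq diff_minus_eq_add uminus_add_conv_diff)
    have P1': "\<forall>n. \<bar>(- p (n+1)) - (- p n)\<bar> \<le> K" using P1 by (simp add: abs_minus_commute)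
    have P3': "\<forall>n. \<bar>(- q n) - (- p n)\<bar> \<le> K" using P3 by (simp add: abs_minus_commute)
    have "\<bar>- p n - - p 0 - n\<bar> \<le> 2*K*A + 2*K + 2" for n
      using incr[of K "\<lambda>n. - p n" "\<lambda>n. - q n", OF K P1' P3' cnt_neg[OF C] A D] by blast
    then show ?thesis by (simp add: CK_def A_def abs_minus_commute algebra_simps)
  qed
qed




lemma sig_split: "{h. sig h \<in> S} = (\<lambda>m. DI m False) ` S \<union> (\<lambda>m. DI (- m) True) ` S"
proof -
  have "h \<in> (\<lambda>m. DI m False) ` S \<union> (\<lambda>m. DI (- m) True) ` S" if "sig h \<in> S" for h
  proof (cases h)
    case (DI m a)
    show ?thesis
    proof (cases a)
      case True
      then have "h = (\<lambda>m. DI (- m) True) (- m)" "- m \<in> S" using DI that by auto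
      then show ?thesis by blast
    next
      case False
      then have "h = (\<lambda>m. DI m False) m" "m \<in> S" using DI that by auto
      then show ?thesis by blast
    qed
  qed
  then show ?thesis by auto
qed

lemma card_sig: assumes "finite S" shows "finite {h. sig h \<in> S}" "card {h. sig h \<in> S} = 2 * card S"
proof -
  have i1: "inj (\<lambda>m. DI m False)" "inj (\<lambda>m. DI (- m) True)" by (auto simp: inj_def)
  have d: "(\<lambda>m. DI m False) ` S \<inter> (\<lambda>m. DI (- m) True) ` S = {}" by auto
  show "finite {h. sig h \<in> S}" using assms unfolding sig_split by auto
  show "card {h. sig h \<in> S} = 2 * card S" unfolding sig_split
    using card_Un_disjoint[OF _ _ d] assms card_image[OF inj_on_subset[OF i1(1) subset_UNIV]]
      card_image[OF inj_on_subset[OF i1(2) subset_UNIV]] by simp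
qed

lemma core_group:
  fixes F G :: "dinf \<Rightarrow> dinf"
  assumes FG: "\<forall>h. F (G h) = h" and GF: "\<forall>u. G (F u) = u"
    and K: "K \<ge> 0"
    and Fs: "\<forall>u. \<bar>sig (F (dmult gen_s u)) - sig (F u)\<bar> \<le> K"
    and Ft: "\<forall>u. \<bar>sig (F (dmult gen_t u)) - sig (F u)\<bar> \<le> K"
    and Gs: "\<forall>h. \<bar>sig (G (dmult gen_s h)) - sig (G h)\<bar> \<le> K"
    and Gt: "\<forall>h. \<bar>sig (G (dmult gen_t h)) - sig (G h)\<bar> \<le> K"
    and F1: "F dunit = dunit"
  shows "(\<forall>n. \<bar>sig (F (DI n False)) - n\<bar> \<le> CK K) \<or> (\<forall>n. \<bar>sig (F (DI n False)) + n\<bar> \<le> CK K)"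
proof -
  define p where "p n = sig (F (DI n False))" for n
  define q where "q n = sig (F (DI (- n) True))" for n
  have es: "DI (n+1) False = dmult gen_s (DI n False)" for n by (simp add: gen_s_def)
  have et: "DI (- n) True = dmult gen_t (DI n False)" for n by (simp add: gen_t_def)
  have P1: "\<forall>n. \<bar>p (n+1) - p n\<bar> \<le> K" unfolding p_def es using Fs by blast
  have P3: "\<forall>n. \<bar>q n - p n\<bar> \<le> K" unfolding p_def q_def et using Ft by blast
  have Gline: "\<bar>sig (G (DI (a + int j) False)) - sig (G (DI a False))\<bar> \<le> K * int j" for a j
  proof (induction j)
    case 0 then show ?case by simp
  next
    case (Suc j)
    have "\<bar>sig (G (DI (a + int j + 1) False)) - sig (G (DI (a + int j) False))\<bar> \<le> K"
      unfolding es using Gs by blast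
    then show ?case using Suc by (simp add: algebra_simps)
  qed
  have Gline2: "\<bar>sig (G (DI a False)) - sig (G (DI b False))\<bar> \<le> K * \<bar>a - b\<bar>" for a b
  proof (cases "a \<le> b")
    case True then show ?thesis using Gline[of a "nat (b - a)"] by (simp add: abs_minus_commute)
  next
    case False then show ?thesis using Gline[of b "nat (a - b)"] by simp
  qed
  have Gpt: "\<bar>sig (G h) - sig (G (DI (sig h) False))\<bar> \<le> K" for h
  proof (cases h)
    case (DI m a)
    show ?thesis
    proof (cases a)
      case True
      then have "h = dmult gen_t (DI (sig h) False)" using DI by (simp add: gen_t_def)
      then show ?thesis using Gt by metis
    next
      case False then show ?thesis using DI K by simp
    qed
  qed
  have Glip: "\<bar>sig (G h1) - sig (G h2)\<bar> \<le> K * (\<bar>sig h1 - sig h2\<bar> + 2)" for h1 h2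
    using Gpt[of h1] Gpt[of h2] Gline2[of "sig h1" "sig h2"] by (simp add: algebra_simps)
  have P2: "\<forall>n m. \<bar>n - m\<bar> \<le> K * (\<bar>p n - p m\<bar> + 2)"
  proof (intro allI)
    fix n m
    show "\<bar>n - m\<bar> \<le> K * (\<bar>p n - p m\<bar> + 2)"
      using Glip[of "F (DI n False)" "F (DI m False)"] GF unfolding p_def by simp
  qed
  have injG: "inj G" by (metis FG injI)
  have C: "cnt p q" unfolding cnt_def
  proof (intro allI)
    fix a b :: int
    let ?I = "{a..b}"
    have e1: "{u. sig (F u) \<in> ?I} = G ` {h. sig h \<in> ?I}"
      using FG GF by (auto simp: image_iff) metis
    have fin: "finite {u. sig (F u) \<in> ?I}" "card {u. sig (F u) \<in> ?I} = 2 * card ?I"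
      unfolding e1 using card_sig[of ?I] card_image[OF inj_on_subset[OF injG subset_UNIV]] by auto
    have e2: "{u. sig (F u) \<in> ?I} = (\<lambda>n. DI n False) ` {n. p n \<in> ?I} \<union> (\<lambda>n. DI (- n) True) ` {n. q n \<in> ?I}"
    proof -
      have "u \<in> (\<lambda>n. DI n False) ` {n. p n \<in> ?I} \<union> (\<lambda>n. DI (- n) True) ` {n. q n \<in> ?I}"
        if "sig (F u) \<in> ?I" for u
      proof (cases u)
        case (DI m a)
        show ?thesis
        proof (cases a)
          case True
          then have "u = (\<lambda>n. DI (- n) True) (- m)" "- m \<in> {n. q n \<in> ?I}" using DI that by (auto simp: q_def)
          then show ?thesis by blast
        next
          case False
          then have "u = (\<lambda>n. DI n False) m" "m \<in> {n. p n \<in> ?I}" using DI that by (auto simp: p_def)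
          then show ?thesis by blast
        qed
      qed
      then show ?thesis by (auto simp: p_def q_def)
    qed
    have i1: "inj (\<lambda>m. DI m False)" "inj (\<lambda>m. DI (- m) True)" by (auto simp: inj_def)
    have d: "(\<lambda>n. DI n False) ` {n. p n \<in> ?I} \<inter> (\<lambda>n. DI (- n) True) ` {n. q n \<in> ?I} = {}" by auto
    have f1: "finite ((\<lambda>n. DI n False) ` {n. p n \<in> ?I})" "finite ((\<lambda>n. DI (- n) True) ` {n. q n \<in> ?I})"
      using fin(1) unfolding e2 by auto
    then have f2: "finite {n. p n \<in> ?I}" "finite {n. q n \<in> ?I}"
      using finite_imageD inj_on_subset[OF i1(1) subset_UNIV] inj_on_subset[OF i1(2) subset_UNIV] by blast+
    have "card {u. sig (F u) \<in> ?I} = card {n. p n \<in> ?I} + card {n. q n \<in> ?I}"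
      unfolding e2 using card_Un_disjoint[OF f1 d] card_image[OF inj_on_subset[OF i1(1) subset_UNIV]]
      card_image[OF inj_on_subset[OF i1(2) subset_UNIV]] by simp
    then show "finite {n. p n \<in> ?I} \<and> finite {n. q n \<in> ?I} \<and> card {n. p n \<in> ?I} + card {n. q n \<in> ?I} = 2 * card ?I"
      using f2 fin(2) by simp
  qed
  have p0: "p 0 = 0" using F1 unfolding p_def by (simp add: dunit_def[symmetric]) (simp add: dunit_def)
  show ?thesis using core_int[OF K P1 P2 P3 C] p0 unfolding p_def by simp
qed




lemma dinv_cancel: "dmult (dinv v) u = dunit \<Longrightarrow> u = v"
  by (cases u; cases v) (auto simp: dunit_def split: if_splits)

lemma idem_unit: "dmult y y = y \<Longrightarrow> y = dunit"
  by (cases y) (auto simp: dunit_def split: if_splits)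

locale minact =
  fixes \<alpha> :: "dinf \<Rightarrow> 'a::t2_space \<Rightarrow> 'a"
  assumes cpt: "compact (UNIV::'a set)" and inf: "infinite (UNIV::'a set)"
    and act: "cont_action \<alpha>" and mina: "minimal_action \<alpha>"
begin

lemma comp: "\<alpha> (dmult g h) x = \<alpha> g (\<alpha> h x)" using act unfolding cont_action_def by (metis comp_apply)
lemma unit[simp]: "\<alpha> dunit x = x" using act unfolding cont_action_def by simp
lemma cont: "continuous_on UNIV (\<alpha> g)" using act unfolding cont_action_def by blast
lemma inv1[simp]: "\<alpha> (dinv g) (\<alpha> g x) = x" by (metis comp dinv_left unit)
lemma inv2[simp]: "\<alpha> g (\<alpha> (dinv g) x) = x" by (metis comp dinv_right unit)
lemma dense: "closure (range (\<lambda>g. \<alpha> g x)) = UNIV" using mina minimal_action_def by blast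
lemma closed_fix: "closed {x. \<alpha> g x = x}" by (rule closed_Collect_eq[OF cont continuous_on_id])

lemma orbit_meets: "open U \<Longrightarrow> U \<noteq> {} \<Longrightarrow> \<exists>g. \<alpha> g x \<in> U"
  using open_Int_closure_eq_empty[of U "range (\<lambda>g. \<alpha> g x)"] dense by auto

lemma no_isolated: assumes "open U" "x \<in> U" shows "\<exists>g. \<alpha> g x \<in> U \<and> \<alpha> g x \<noteq> x"
proof (rule ccontr)
  assume H: "\<not> ?thesis"
  have "U - {x} = {}"
  proof (rule ccontr)
    assume "U - {x} \<noteq> {}"
    moreover have "open (U - {x})" using assms(1) by (simp add: open_Diff)
    ultimately obtain g where "\<alpha> g x \<in> U - {x}" using orbit_meets by blast
    then show False using H by blast
  qed
  then have Ux: "U = {x}" using assms(2) by blast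
  have op: "open {\<alpha> h x}" for h
  proof -
    have "{\<alpha> h x} = \<alpha> (dinv h) -` U" using Ux by auto
    then show ?thesis using continuous_on_open_vimage[of UNIV "\<alpha> (dinv h)"] cont assms(1) by auto
  qed
  have allorb: "\<forall>y. \<exists>h. y = \<alpha> h x"
  proof
    fix y obtain g where "\<alpha> g y \<in> U" using orbit_meets[OF assms(1)] assms(2) by blast
    then have "\<alpha> g y = x" using Ux by auto
    then have "y = \<alpha> (dinv g) x" by (metis inv1)
    then show "\<exists>h. y = \<alpha> h x" by blast
  qed
  obtain z where "z islimpt (UNIV::'a set)" using Heine_Borel_imp_Bolzano_Weierstrass[OF cpt inf] by blast
  moreover obtain h where "z = \<alpha> h x" using allorb by blast
  ultimately show False using op[of h] unfolding islimpt_def by auto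
qed

lemma pow_id: assumes "\<forall>y. \<alpha> (DI n False) y = y" shows "\<alpha> (DI (n * k) False) y = y"
proof -
  have nat: "\<alpha> (DI (n * int j) False) y = y" for j y
  proof (induction j arbitrary: y)
    case 0
    have "DI 0 False = dunit" by (simp add: dunit_def)
    then show ?case by simp
  next
    case (Suc j)
    have e: "DI (n * int (Suc j)) False = dmult (DI n False) (DI (n * int j) False)" by (simp add: algebra_simps)
    show ?case unfolding e comp using Suc assms by simp
  qed
  show ?thesis
  proof (cases "k \<ge> 0")
    case True then show ?thesis using nat[of "nat k"] by simp
  next
    case False
    have e: "DI (n*k) False = dinv (DI (n * int (nat (-k))) False)" using False by simp
    have "\<alpha> (DI (n * int (nat (-k))) False) y = y" by (rule nat)
    then have "\<alpha> (dinv (DI (n * int (nat (-k))) False)) y = y"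
      using inv1[of "DI (n * int (nat (-k))) False" y] by (simp del: dinv.simps)
    then show ?thesis unfolding e .
  qed
qed

lemma fix_s: assumes "\<alpha> (DI n False) z = z" shows "n = 0"
proof (rule ccontr)
  assume n: "n \<noteq> 0"
  let ?F = "{y. \<alpha> (DI n False) y = y}"
  have inv: "\<alpha> g y \<in> ?F" if "y \<in> ?F" for g y
  proof (cases g)
    case (DI m e)
    show ?thesis
    proof (cases e)
      case False
      have eq: "dmult (DI n False) g = dmult g (DI n False)" using DI False by simp
      have "\<alpha> (DI n False) (\<alpha> g y) = \<alpha> (dmult (DI n False) g) y" by (simp add: comp)
      also have "\<dots> = \<alpha> (dmult g (DI n False)) y" using eq by simp
      also have "\<dots> = \<alpha> g y" using that by (simp add: comp)
      finally show ?thesis by simp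
    next
      case True
      have eq: "dmult (DI n False) g = dmult g (dinv (DI n False))" using DI True by simp
      have y: "\<alpha> (DI n False) y = y" using that by simp
      have i: "\<alpha> (dinv (DI n False)) y = y"
        using inv1[of "DI n False" y] y by (simp del: dinv.simps)
      have "\<alpha> (DI n False) (\<alpha> g y) = \<alpha> (dmult (DI n False) g) y" by (simp add: comp)
      also have "\<dots> = \<alpha> (dmult g (dinv (DI n False))) y" using eq by simp
      also have "\<dots> = \<alpha> g y" using i by (simp add: comp)
      finally show ?thesis by simp
    qed
  qed
  have "range (\<lambda>g. \<alpha> g z) \<subseteq> ?F" using inv assms by auto
  then have "closure (range (\<lambda>g. \<alpha> g z)) \<subseteq> ?F" using closed_fix closure_minimal by blast
  then have all: "\<forall>y. \<alpha> (DI n False) y = y" using dense by auto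
  have sub: "range (\<lambda>g. \<alpha> g z) \<subseteq> (\<lambda>(m,e). \<alpha> (DI m e) z) ` ({-\<bar>n\<bar>..\<bar>n\<bar>} \<times> UNIV)"
  proof
    fix w assume "w \<in> range (\<lambda>g. \<alpha> g z)"
    then obtain g where "w = \<alpha> g z" by blast
    then obtain m e where w: "w = \<alpha> (DI m e) z" by (cases g) blast
    have e: "DI m e = dmult (DI (n * (m div n)) False) (DI (m mod n) e)" by simp
    have "w = \<alpha> (DI (n * (m div n)) False) (\<alpha> (DI (m mod n) e) z)" unfolding w
      by (subst e) (rule comp)
    then have "w = \<alpha> (DI (m mod n) e) z" using pow_id[OF all] by simp
    moreover have "\<bar>m mod n\<bar> < \<bar>n\<bar>" using n by (rule abs_mod_less)
    then have "m mod n \<in> {-\<bar>n\<bar>..\<bar>n\<bar>}" by auto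
    ultimately show "w \<in> (\<lambda>(m,e). \<alpha> (DI m e) z) ` ({-\<bar>n\<bar>..\<bar>n\<bar>} \<times> UNIV)" by force
  qed
  have fin: "finite (range (\<lambda>g. \<alpha> g z))" by (rule finite_subset[OF sub]) auto
  then have "closed (range (\<lambda>g. \<alpha> g z))" by (rule finite_imp_closed)
  then have "closure (range (\<lambda>g. \<alpha> g z)) = range (\<lambda>g. \<alpha> g z)" by (rule closure_closed)
  then have "range (\<lambda>g. \<alpha> g z) = UNIV" using dense[of z] by simp
  then show False using fin inf by simp
qed

lemma fix_refl: assumes "open U" "U \<subseteq> {z. \<alpha> (DI a True) z = z}" shows "U = {}"
proof (rule ccontr)
  assume "U \<noteq> {}" then obtain x where x: "x \<in> U" by blast
  obtain g where g: "\<alpha> g x \<in> U" "\<alpha> g x \<noteq> x" using no_isolated[OF assms(1) x] by blast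
  let ?r = "DI a True"
  have rx: "\<alpha> ?r x = x" and ry: "\<alpha> ?r (\<alpha> g x) = \<alpha> g x" using x g assms(2) by auto
  have r': "\<alpha> (dmult (dinv g) (dmult ?r g)) x = x" using ry by (simp add: comp)
  have "\<alpha> (dinv (dmult (dinv g) (dmult ?r g))) x = \<alpha> (dinv (dmult (dinv g) (dmult ?r g))) (\<alpha> (dmult (dinv g) (dmult ?r g)) x)" using r' by simp
  then have "\<alpha> (dinv (dmult (dinv g) (dmult ?r g))) x = x" by simp
  then have fx: "\<alpha> (dmult ?r (dinv (dmult (dinv g) (dmult ?r g)))) x = x" using rx by (simp add: comp)
  obtain m e where gd: "g = DI m e" by (cases g)
  show False
  proof (cases e)
    case False
    then have "dmult ?r (dinv (dmult (dinv g) (dmult ?r g))) = DI (2*m) False" using gd by simp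
    then have "\<alpha> (DI (2*m) False) x = x" using fx by simp
    then have "m = 0" using fix_s by fastforce
    then have "g = dunit" using gd False by (simp add: dunit_def)
    then show False using g by simp
  next
    case True
    then have "dmult ?r (dinv (dmult (dinv g) (dmult ?r g))) = DI (2*a - 2*m) False" using gd by simp
    then have "\<alpha> (DI (2*a - 2*m) False) x = x" using fx by simp
    then have "m = a" using fix_s by fastforce
    then have "g = ?r" using gd True by simp
    then show False using g rx by simp
  qed
qed

lemma interior_fix: assumes "g \<noteq> dunit" shows "interior {z. \<alpha> g z = z} = {}"
proof (cases g)
  case (DI m e)
  show ?thesis
  proof (cases e)
    case False
    then have "{z. \<alpha> g z = z} = {}" using fix_s DI assms by (auto simp: dunit_def)
    then show ?thesis by simp
  next
    case True
    have "interior {z. \<alpha> g z = z} \<subseteq> {z. \<alpha> (DI m True) z = z}" using DI True interior_subset[of "{z. \<alpha> g z = z}"] by simp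
    then show ?thesis using fix_refl[OF open_interior] by blast
  qed
qed

end




lemma cont_to_dinfE:
  assumes f: "cont_to_dinf f"
  obtains U where "open U" "x \<in> U" "\<forall>y\<in>U. f y = f x"
proof -
  have "\<exists>U. open U \<and> x \<in> U \<and> (\<forall>y\<in>U. f y = f x)" using f unfolding cont_to_dinf_def by simp
  then show ?thesis using that by blast
qed

lemma finite_range_cont:
  assumes cpt: "compact (UNIV::'a::topological_space set)" and f: "cont_to_dinf (f :: 'a \<Rightarrow> dinf)"
  shows "finite (range f)"
proof -
  define T where "T = {U. open U \<and> (\<forall>y\<in>U. \<forall>y'\<in>U. f y = f y')}"
  have cov: "UNIV \<subseteq> \<Union>T"
  proof
    fix x :: 'a
    have "\<exists>U. open U \<and> x \<in> U \<and> (\<forall>y\<in>U. f y = f x)" using f unfolding cont_to_dinf_def by simp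
    then obtain U where U: "open U" "x \<in> U" "\<forall>y\<in>U. f y = f x" by blast
    have "\<forall>y\<in>U. \<forall>y'\<in>U. f y = f y'"
    proof (intro ballI)
      fix y y' assume "y \<in> U" "y' \<in> U"
      then have "f y = f x" "f y' = f x" using U(3) by blast+
      then show "f y = f y'" by (rule trans[OF _ sym])
    qed
    then have "U \<in> T" unfolding T_def using U(1) by blast
    then show "x \<in> \<Union>T" using U(2) by blast
  qed
  have opT: "\<And>B. B \<in> T \<Longrightarrow> open B" unfolding T_def by simp
  obtain T' where T': "T' \<subseteq> T" "finite T'" "UNIV \<subseteq> \<Union>T'" using compactE[OF cpt cov opT] by blast
  have fi: "finite (f ` U)" if "U \<in> T'" for U
  proof (cases "U = {}")
    case True then show ?thesis by simp
  next
    case False then obtain u where u: "u \<in> U" by blast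
    have "U \<in> T" using that T'(1) by blast
    then have "\<forall>y\<in>U. f y = f u" using u unfolding T_def by blast
    then have "f ` U \<subseteq> {f u}" by blast
    then show ?thesis using finite_subset by blast
  qed
  have "range f \<subseteq> \<Union> ((\<lambda>U. f ` U) ` T')" using T'(3) by blast
  moreover have "finite (\<Union> ((\<lambda>U. f ` U) ` T'))" using T'(2) fi by simp
  ultimately show ?thesis using finite_subset by blast
qed

lemma bnd_cont:
  assumes "compact (UNIV::'a::topological_space set)" "cont_to_dinf (f :: 'a \<Rightarrow> dinf)"
  shows "\<exists>K\<ge>0. \<forall>x. \<bar>sx (f x)\<bar> \<le> K"
proof -
  have fin: "finite ((\<lambda>s. \<bar>sx s\<bar>) ` range f)" using finite_range_cont[OF assms] by simp
  define K where "K = Max ((\<lambda>s. \<bar>sx s\<bar>) ` range f)"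
  have a: "\<forall>x. \<bar>sx (f x)\<bar> \<le> K" using Max_ge[OF fin] unfolding K_def by auto
  moreover have "K \<ge> 0" using a[rule_format, of undefined] by linarith
  ultimately show ?thesis by blast
qed

lemma open_pred: assumes f: "cont_to_dinf f" shows "open {x. P (f x)}"
proof (subst open_subopen, intro ballI)
  fix x assume x: "x \<in> {x. P (f x)}"
  obtain U where U: "open U" "x \<in> U" "\<forall>y\<in>U. f y = f x" by (rule cont_to_dinfE[OF f, of x])
  have "U \<subseteq> {x. P (f x)}"
  proof
    fix y assume "y \<in> U"
    then have "f y = f x" using U(3) by blast
    then show "y \<in> {x. P (f x)}" using x by simp
  qed
  then show "\<exists>T. open T \<and> x \<in> T \<and> T \<subseteq> {x. P (f x)}" using U(1,2) by blast
qed

lemma nbhd_finite: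
  assumes "finite S" "\<forall>n\<in>S. cont_to_dinf (f n)"
  shows "\<exists>V. open V \<and> x \<in> V \<and> (\<forall>y\<in>V. \<forall>n\<in>S. f n y = f n x)"
  using assms
proof (induction S rule: finite_induct)
  case empty then show ?case by (intro exI[of _ UNIV]) auto
next
  case (insert a S)
  obtain V where V: "open V" "x \<in> V" "\<forall>y\<in>V. \<forall>n\<in>S. f n y = f n x" using insert by auto
  have "cont_to_dinf (f a)" using insert.prems by simp
  then obtain U where U: "open U" "x \<in> U" "\<forall>y\<in>U. f a y = f a x" by (rule cont_to_dinfE)
  have "open (V \<inter> U)" "x \<in> V \<inter> U" using V U by auto
  moreover have "\<forall>y\<in>V \<inter> U. \<forall>n\<in>insert a S. f n y = f n x" using V(3) U(3) by blast
  ultimately show ?case by blast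
qed

lemma countable_dinf: "countable (UNIV :: dinf set)"
proof -
  have "UNIV = (\<lambda>(m,a). DI m a) ` (UNIV :: (int \<times> bool) set)"
  proof (rule set_eqI)
    fix x :: dinf show "x \<in> UNIV \<longleftrightarrow> x \<in> (\<lambda>(m,a). DI m a) ` UNIV" by (cases x) auto
  qed
  moreover have "countable ((\<lambda>(m,a). DI m a) ` (UNIV :: (int \<times> bool) set))" by simp
  ultimately show ?thesis by simp
qed

lemma Hausdorff_eu: "Hausdorff_space (euclidean :: 'a::t2_space topology)"
  unfolding Hausdorff_space_def disjnt_def
proof (intro allI impI)
  fix x y :: 'a assume "x \<in> topspace euclidean \<and> y \<in> topspace euclidean \<and> x \<noteq> y"
  then have "x \<noteq> y" by blast
  from hausdorff[OF this] obtain U V where UV: "open U" "open V" "x \<in> U" "y \<in> V" "U \<inter> V = {}" by blast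
  show "\<exists>U V. openin euclidean U \<and> openin euclidean V \<and> x \<in> U \<and> y \<in> V \<and> U \<inter> V = {}"
    using UV by (intro exI[of _ U] exI[of _ V]) simp
qed

theorem mainTheorem9:
  fixes \<alpha> \<beta> :: "dinf \<Rightarrow> 'a::t2_space \<Rightarrow> 'a"
    and \<phi> \<psi> :: "'a \<Rightarrow> 'a"
    and c b :: "dinf \<Rightarrow> 'a \<Rightarrow> dinf"
  assumes cpt: "compact (UNIV :: 'a set)"
    and inf: "infinite (UNIV :: 'a set)"
    and act_a: "cont_action \<alpha>" and act_b: "cont_action \<beta>"
    and min_a: "minimal_action \<alpha>" and min_b: "minimal_action \<beta>"
    and homeo: "homeomorphism UNIV UNIV \<phi> \<psi>"
    and c_cont: "\<forall>g. cont_to_dinf (c g)"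
    and b_cont: "\<forall>h. cont_to_dinf (b h)"
    and c_eq: "\<forall>g x. \<phi> (\<alpha> g x) = \<beta> (c g x) (\<phi> x)"
    and b_eq: "\<forall>h y. \<psi> (\<beta> h y) = \<alpha> (b h y) (\<psi> y)"
    and c_cocycle: "\<forall>g1 g2 x. c (dmult g1 g2) x = dmult (c g1 (\<alpha> g2 x)) (c g2 x)"
  defines "Xp \<equiv> {x. \<exists>B. \<forall>n::int. word_dist (c (dzpow gen_s n) x) (dzpow gen_s n) \<le> B}"
    and "Xm \<equiv> {x. \<exists>B. \<forall>n::int. word_dist (c (dzpow gen_s n) x) (dzpow gen_s (- n)) \<le> B}"
  shows "Xp \<union> Xm = UNIV \<and> Xp \<inter> Xm = {} \<and> open Xp \<and> closed Xp \<and> open Xm \<and> closed Xm"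
proof -
  interpret A: minact \<alpha> using cpt inf act_a min_a by unfold_locales
  interpret B: minact \<beta> using cpt inf act_b min_b by unfold_locales
  have psi_phi: "\<psi> (\<phi> x) = x" for x using homeomorphism_apply1[OF homeo] by blast
  have phi_psi: "\<phi> (\<psi> y) = y" for y using homeomorphism_apply2[OF homeo] by blast
  have c_unit: "c dunit x = dunit" for x
  proof -
    have "c (dmult dunit dunit) x = dmult (c dunit (\<alpha> dunit x)) (c dunit x)" using c_cocycle by blast
    then show ?thesis by (intro idem_unit) simp
  qed
  obtain K1 where K1: "K1 \<ge> 0" "\<forall>x. \<bar>sx (c gen_s x)\<bar> \<le> K1" using bnd_cont[OF cpt] c_cont by blast
  obtain K2 where K2: "K2 \<ge> 0" "\<forall>x. \<bar>sx (c gen_t x)\<bar> \<le> K2" using bnd_cont[OF cpt] c_cont by blast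
  obtain K3 where K3: "K3 \<ge> 0" "\<forall>x. \<bar>sx (b gen_s x)\<bar> \<le> K3" using bnd_cont[OF cpt] b_cont by blast
  obtain K4 where K4: "K4 \<ge> 0" "\<forall>x. \<bar>sx (b gen_t x)\<bar> \<le> K4" using bnd_cont[OF cpt] b_cont by blast
  define K where "K = K1 + K2 + K3 + K4"
  have K0: "K \<ge> 0" using K1 K2 K3 K4 by (simp add: K_def)
  have Kc1: "\<bar>sx (c gen_s x)\<bar> \<le> K" for x using K1(2)[rule_format, of x] K2(1) K3(1) K4(1) unfolding K_def by linarith
  have Kc2: "\<bar>sx (c gen_t x)\<bar> \<le> K" for x using K2(2)[rule_format, of x] K1(1) K3(1) K4(1) unfolding K_def by linarith
  have Kb1: "\<bar>sx (b gen_s x)\<bar> \<le> K" for x using K3(2)[rule_format, of x] K2(1) K1(1) K4(1) unfolding K_def by linarith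
  have Kb2: "\<bar>sx (b gen_t x)\<bar> \<le> K" for x using K4(2)[rule_format, of x] K2(1) K3(1) K1(1) unfolding K_def by linarith
  define C where "C = CK K"
  have C0: "C \<ge> 0" using K0 unfolding C_def CK_def by simp
  define p where "p x n = sig (c (DI n False) x)" for x n
  have free_res: "(\<forall>n. \<bar>p z n - n\<bar> \<le> C) \<or> (\<forall>n. \<bar>p z n + n\<bar> \<le> C)"
    if fa: "\<forall>g. \<alpha> g z = z \<longrightarrow> g = dunit" and fb: "\<forall>g. \<beta> g (\<phi> z) = \<phi> z \<longrightarrow> g = dunit" for z
  proof -
    have ainj: "u = v" if "\<alpha> u z = \<alpha> v z" for u v
    proof -
      have "\<alpha> (dinv v) (\<alpha> u z) = \<alpha> (dinv v) (\<alpha> v z)" using that by simp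
      then have "\<alpha> (dmult (dinv v) u) z = z" by (simp only: A.comp A.inv1)
      then show "u = v" using fa dinv_cancel by blast
    qed
    have binj: "u = v" if "\<beta> u (\<phi> z) = \<beta> v (\<phi> z)" for u v
    proof -
      have "\<beta> (dinv v) (\<beta> u (\<phi> z)) = \<beta> (dinv v) (\<beta> v (\<phi> z))" using that by simp
      then have "\<beta> (dmult (dinv v) u) (\<phi> z) = \<phi> z" by (simp only: B.comp B.inv1)
      then show "u = v" using fb dinv_cancel by blast
    qed
    define F where "F u = c u z" for u
    define G where "G h = b h (\<phi> z)" for h
    have key: "\<phi> (\<alpha> u z) = \<beta> (F u) (\<phi> z)" for u using c_eq unfolding F_def by blast
    have key2: "\<psi> (\<beta> h (\<phi> z)) = \<alpha> (G h) z" for h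
    proof -
      have "\<psi> (\<beta> h (\<phi> z)) = \<alpha> (b h (\<phi> z)) (\<psi> (\<phi> z))" using b_eq by blast
      then show ?thesis unfolding G_def psi_phi .
    qed
    have GF: "\<forall>u. G (F u) = u"
    proof
      fix u
      have "\<alpha> (G (F u)) z = \<psi> (\<beta> (F u) (\<phi> z))" using key2 by simp
      also have "\<dots> = \<psi> (\<phi> (\<alpha> u z))" using key by simp
      also have "\<dots> = \<alpha> u z" using psi_phi by simp
      finally show "G (F u) = u" using ainj by blast
    qed
    have FG: "\<forall>h. F (G h) = h"
    proof
      fix h
      have "\<beta> (F (G h)) (\<phi> z) = \<phi> (\<alpha> (G h) z)" using key by simp
      also have "\<dots> = \<phi> (\<psi> (\<beta> h (\<phi> z)))" using key2 by simp
      also have "\<dots> = \<beta> h (\<phi> z)" using phi_psi by simp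
      finally show "F (G h) = h" using binj by blast
    qed
    have Fstep: "F (dmult g u) = dmult (c g (\<alpha> u z)) (F u)" for g u using c_cocycle unfolding F_def by blast
    have Gstep: "G (dmult g h) = dmult (b g (\<beta> h (\<phi> z))) (G h)" for g h
    proof -
      have "\<alpha> (G (dmult g h)) z = \<psi> (\<beta> (dmult g h) (\<phi> z))" using key2 by simp
      also have "\<dots> = \<psi> (\<beta> g (\<beta> h (\<phi> z)))" by (simp add: B.comp)
      also have "\<dots> = \<alpha> (b g (\<beta> h (\<phi> z))) (\<psi> (\<beta> h (\<phi> z)))" using b_eq by blast
      also have "\<dots> = \<alpha> (dmult (b g (\<beta> h (\<phi> z))) (G h)) z" using key2 by (simp add: A.comp)
      finally show ?thesis using ainj by blast
    qed
    have Fs: "\<forall>u. \<bar>sig (F (dmult gen_s u)) - sig (F u)\<bar> \<le> K"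
      using Fstep sig_dmult Kc1 order_trans by metis
    have Ft: "\<forall>u. \<bar>sig (F (dmult gen_t u)) - sig (F u)\<bar> \<le> K"
      using Fstep sig_dmult Kc2 order_trans by metis
    have Gs: "\<forall>h. \<bar>sig (G (dmult gen_s h)) - sig (G h)\<bar> \<le> K"
      using Gstep sig_dmult Kb1 order_trans by metis
    have Gt: "\<forall>h. \<bar>sig (G (dmult gen_t h)) - sig (G h)\<bar> \<le> K"
      using Gstep sig_dmult Kb2 order_trans by metis
    have F1: "F dunit = dunit" using c_unit unfolding F_def by blast
    have "(\<forall>n. \<bar>sig (F (DI n False)) - n\<bar> \<le> CK K) \<or> (\<forall>n. \<bar>sig (F (DI n False)) + n\<bar> \<le> CK K)"
      by (rule core_group[OF FG GF K0 Fs Ft Gs Gt F1])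
    then show ?thesis unfolding p_def F_def C_def by simp
  qed
  have dense_free: "\<exists>z\<in>V. (\<forall>g. \<alpha> g z = z \<longrightarrow> g = dunit) \<and> (\<forall>g. \<beta> g (\<phi> z) = \<phi> z \<longrightarrow> g = dunit)"
    if V: "open V" "V \<noteq> {}" for V
  proof -
    define \<G> where "\<G> = (\<lambda>g. {z. \<alpha> g z = z}) ` (UNIV - {dunit}) \<union> (\<lambda>g. {z. \<beta> g (\<phi> z) = \<phi> z}) ` (UNIV - {dunit})"
    have cntG: "countable \<G>"
    proof -
      have "countable (UNIV - {dunit})" using countable_dinf by (rule countable_subset[rotated]) simp
      then show ?thesis unfolding \<G>_def by simp
    qed
    have phicont: "continuous_on UNIV \<phi>" using homeomorphism_cont1[OF homeo] .
    have psicont: "continuous_on UNIV \<psi>" using homeomorphism_cont2[OF homeo] .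
    have T: "closedin euclidean T \<and> euclidean interior_of T = {}" if "T \<in> \<G>" for T
    proof -
      from that consider g where "g \<noteq> dunit" "T = {z. \<alpha> g z = z}"
        | g where "g \<noteq> dunit" "T = {z. \<beta> g (\<phi> z) = \<phi> z}" unfolding \<G>_def by blast
      then show ?thesis
      proof cases
        case 1
        have "closed T" unfolding 1(2) by (rule A.closed_fix)
        moreover have "interior T = {}" unfolding 1(2) by (rule A.interior_fix[OF 1(1)])
        ultimately show ?thesis by simp
      next
        case 2
        have c1: "continuous_on UNIV (\<lambda>z. \<beta> g (\<phi> z))"
          by (rule continuous_on_compose2[OF B.cont phicont]) simp
        have cl: "closed T" unfolding 2(2) by (rule closed_Collect_eq[OF c1 phicont])
        have "interior T = {}"
        proof -
          have im: "\<phi> ` interior T = \<psi> -` interior T"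
          proof (rule set_eqI)
            fix y show "y \<in> \<phi> ` interior T \<longleftrightarrow> y \<in> \<psi> -` interior T"
              using psi_phi phi_psi by (metis image_iff vimageE vimageI)
          qed
          have op: "open (\<phi> ` interior T)" unfolding im
            using continuous_on_open_vimage[of UNIV \<psi>] psicont by auto
          have sub: "\<phi> ` interior T \<subseteq> {y. \<beta> g y = y}" using interior_subset[of T] 2(2) by auto
          have "\<phi> ` interior T \<subseteq> interior {y. \<beta> g y = y}" by (rule interior_maximal[OF sub op])
          then have "\<phi> ` interior T = {}" using B.interior_fix[OF 2(1)] by blast
          then show ?thesis by simp
        qed
        then show ?thesis using cl by simp
      qed
    qed
    have lc: "locally_compact_space (euclidean::'a topology) \<and> regular_space (euclidean::'a topology)"
    proof -
      have cs: "compact_space (euclidean::'a topology)" using cpt by (simp add: compact_space_def)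
      show ?thesis using compact_imp_locally_compact_space[OF cs]
          compact_Hausdorff_imp_regular_space[OF cs Hausdorff_eu] by blast
    qed
    have "euclidean interior_of \<Union>\<G> = {}" using Baire_category_alt[of euclidean \<G>] lc cntG T by blast
    then have int0: "interior (\<Union>\<G>) = {}" by simp
    have "\<not> V \<subseteq> \<Union>\<G>"
    proof
      assume "V \<subseteq> \<Union>\<G>" then have "V \<subseteq> interior (\<Union>\<G>)" using V(1) interior_maximal by blast
      then show False using int0 V(2) by blast
    qed
    then obtain z where z: "z \<in> V" "z \<notin> \<Union>\<G>" by blast
    have f1: "\<forall>g. \<alpha> g z = z \<longrightarrow> g = dunit"
    proof (intro allI impI)
      fix g assume g: "\<alpha> g z = z"
      show "g = dunit"
      proof (rule ccontr)
        assume "g \<noteq> dunit"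
        then have "{z. \<alpha> g z = z} \<in> \<G>" unfolding \<G>_def by blast
        then have "z \<in> \<Union>\<G>" using g by blast
        then show False using z(2) by blast
      qed
    qed
    have f2: "\<forall>g. \<beta> g (\<phi> z) = \<phi> z \<longrightarrow> g = dunit"
    proof (intro allI impI)
      fix g assume g: "\<beta> g (\<phi> z) = \<phi> z"
      show "g = dunit"
      proof (rule ccontr)
        assume "g \<noteq> dunit"
        then have "{z. \<beta> g (\<phi> z) = \<phi> z} \<in> \<G>" unfolding \<G>_def by blast
        then have "z \<in> \<Union>\<G>" using g by blast
        then show False using z(2) by blast
      qed
    qed
    show ?thesis using z(1) f1 f2 by blast
  qed
  have win: "(\<forall>n\<in>{-N..N}. \<bar>p x n - n\<bar> \<le> C) \<or> (\<forall>n\<in>{-N..N}. \<bar>p x n + n\<bar> \<le> C)" for x N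
  proof -
    have finN: "finite {-N..N}" by simp
    have ccN: "\<forall>n\<in>{-N..N}. cont_to_dinf (c (DI n False))" using c_cont by blast
    obtain V where V: "open V" "x \<in> V" "\<forall>y\<in>V. \<forall>n\<in>{-N..N}. c (DI n False) y = c (DI n False) x"
      using nbhd_finite[OF finN, of "\<lambda>n. c (DI n False)" x] ccN by blast
    have Vne: "V \<noteq> {}" using V(2) by blast
    obtain z where z: "z \<in> V" "\<forall>g. \<alpha> g z = z \<longrightarrow> g = dunit" "\<forall>g. \<beta> g (\<phi> z) = \<phi> z \<longrightarrow> g = dunit"
      using dense_free[OF V(1) Vne] by blast
    have pz: "p z n = p x n" if n: "n \<in> {-N..N}" for n
    proof -
      have "c (DI n False) z = c (DI n False) x" using V(3) z(1) n by blast
      then show ?thesis unfolding p_def by simp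
    qed
    show ?thesis
    proof (rule disjE[OF free_res[OF z(2) z(3)]])
      assume H: "\<forall>n. \<bar>p z n - n\<bar> \<le> C"
      have "\<forall>n\<in>{-N..N}. \<bar>p x n - n\<bar> \<le> C"
      proof
        fix n assume n: "n \<in> {-N..N}"
        show "\<bar>p x n - n\<bar> \<le> C" using H[rule_format, of n] pz[OF n] by simp
      qed
      then show ?thesis by blast
    next
      assume H: "\<forall>n. \<bar>p z n + n\<bar> \<le> C"
      have "\<forall>n\<in>{-N..N}. \<bar>p x n + n\<bar> \<le> C"
      proof
        fix n assume n: "n \<in> {-N..N}"
        show "\<bar>p x n + n\<bar> \<le> C" using H[rule_format, of n] pz[OF n] by simp
      qed
      then show ?thesis by blast
    qed
  qed
  define N0 where "N0 = C + 1"
  have N0: "N0 \<ge> 1" using C0 by (simp add: N0_def)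
  have dich1: "\<forall>n. \<bar>p x n - n\<bar> \<le> C" if h: "\<bar>p x N0 - N0\<bar> \<le> C" for x
  proof
    fix n
    define N where "N = max N0 \<bar>n\<bar>"
    have nN: "n \<in> {-N..N}" "N0 \<in> {-N..N}" using N0 by (auto simp: N_def)
    from win[where x=x and N=N] show "\<bar>p x n - n\<bar> \<le> C"
    proof
      assume "\<forall>n\<in>{-N..N}. \<bar>p x n - n\<bar> \<le> C" then show ?thesis using nN by blast
    next
      assume "\<forall>n\<in>{-N..N}. \<bar>p x n + n\<bar> \<le> C"
      then have "\<bar>p x N0 + N0\<bar> \<le> C" using nN by blast
      then show ?thesis using h by (simp add: N0_def abs_le_iff)
    qed
  qed
  have dich2: "\<forall>n. \<bar>p x n + n\<bar> \<le> C" if h: "\<not> \<bar>p x N0 - N0\<bar> \<le> C" for x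
  proof
    fix n
    define N where "N = max N0 \<bar>n\<bar>"
    have nN: "n \<in> {-N..N}" "N0 \<in> {-N..N}" using N0 by (auto simp: N_def)
    from win[where x=x and N=N] show "\<bar>p x n + n\<bar> \<le> C"
    proof
      assume "\<forall>n\<in>{-N..N}. \<bar>p x n - n\<bar> \<le> C" then show ?thesis using nN h by blast
    next
      assume "\<forall>n\<in>{-N..N}. \<bar>p x n + n\<bar> \<le> C" then show ?thesis using nN by blast
    qed
  qed
  define W where "W = {x. \<bar>p x N0 - N0\<bar> \<le> C}"
  have wd1: "int (word_dist (c (dzpow gen_s n) x) (dzpow gen_s n)) = \<bar>n - p x n\<bar> + (if tb (c (DI n False) x) then 1 else 0)" for n x
    unfolding p_def by (simp add: word_dist_s)
  have wd2: "int (word_dist (c (dzpow gen_s n) x) (dzpow gen_s (- n))) = \<bar>p x n + n\<bar> + (if tb (c (DI n False) x) then 1 else 0)" for n x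
  proof -
    have "dzpow gen_s (- n) = DI (- n) False" by simp
    then show ?thesis unfolding p_def by (simp add: word_dist_s abs_minus_commute add.commute)
  qed
  have XpW: "Xp = W"
  proof (rule set_eqI, rule iffI)
    fix x assume "x \<in> Xp"
    then obtain B where B: "\<forall>n. word_dist (c (dzpow gen_s n) x) (dzpow gen_s n) \<le> B" unfolding Xp_def by blast
    have Bn: "\<bar>n - p x n\<bar> \<le> int B" for n
    proof -
      have "int (word_dist (c (dzpow gen_s n) x) (dzpow gen_s n)) \<le> int B" using B by simp
      then show ?thesis unfolding wd1 by (simp split: if_splits)
    qed
    show "x \<in> W"
    proof (rule ccontr)
      assume "x \<notin> W"
      then have h2: "\<forall>n. \<bar>p x n + n\<bar> \<le> C" using dich2 unfolding W_def by blast
      define n where "n = int B + C + 1"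
      have "\<bar>n - p x n\<bar> \<le> int B" "\<bar>p x n + n\<bar> \<le> C" using Bn h2 by blast+
      then show False using C0 unfolding n_def by (simp add: abs_le_iff)
    qed
  next
    fix x assume "x \<in> W"
    then have h1: "\<forall>n. \<bar>p x n - n\<bar> \<le> C" using dich1 unfolding W_def by blast
    have "word_dist (c (dzpow gen_s n) x) (dzpow gen_s n) \<le> nat C + 1" for n
    proof -
      have "\<bar>n - p x n\<bar> \<le> C" using h1 by (simp add: abs_minus_commute)
      then have "int (word_dist (c (dzpow gen_s n) x) (dzpow gen_s n)) \<le> C + 1" unfolding wd1 by simp
      then show ?thesis using C0 by simp
    qed
    then show "x \<in> Xp" unfolding Xp_def by blast
  qed
  have XmW: "Xm = - W"
  proof (rule set_eqI, rule iffI)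
    fix x assume "x \<in> Xm"
    then obtain B where B: "\<forall>n. word_dist (c (dzpow gen_s n) x) (dzpow gen_s (- n)) \<le> B" unfolding Xm_def by blast
    have Bn: "\<bar>p x n + n\<bar> \<le> int B" for n
    proof -
      have "int (word_dist (c (dzpow gen_s n) x) (dzpow gen_s (- n))) \<le> int B" using B by simp
      then show ?thesis unfolding wd2 by (simp split: if_splits)
    qed
    show "x \<in> - W"
    proof
      assume "x \<in> W"
      then have h1: "\<forall>n. \<bar>p x n - n\<bar> \<le> C" using dich1 unfolding W_def by blast
      define n where "n = int B + C + 1"
      have "\<bar>p x n + n\<bar> \<le> int B" "\<bar>p x n - n\<bar> \<le> C" using Bn h1 by blast+
      then show False using C0 unfolding n_def by (simp add: abs_le_iff)
    qed
  next
    fix x assume "x \<in> - W"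
    then have h2: "\<forall>n. \<bar>p x n + n\<bar> \<le> C" using dich2 unfolding W_def by blast
    have "word_dist (c (dzpow gen_s n) x) (dzpow gen_s (- n)) \<le> nat C + 1" for n
    proof -
      have "\<bar>p x n + n\<bar> \<le> C" using h2 by blast
      then have "int (word_dist (c (dzpow gen_s n) x) (dzpow gen_s (- n))) \<le> C + 1" unfolding wd2 by simp
      then show ?thesis using C0 by simp
    qed
    then show "x \<in> Xm" unfolding Xm_def by blast
  qed
  have cN: "cont_to_dinf (c (DI N0 False))" using c_cont by blast
  have oW: "open W"
  proof -
    have "W = {x. (\<lambda>v. \<bar>sig v - N0\<bar> \<le> C) (c (DI N0 False) x)}" unfolding W_def p_def by simp
    then show ?thesis using open_pred[OF cN] by simp
  qed
  have oW': "open (- W)"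
  proof -
    have "- W = {x. (\<lambda>v. \<not> \<bar>sig v - N0\<bar> \<le> C) (c (DI N0 False) x)}" unfolding W_def p_def by auto
    then show ?thesis using open_pred[OF cN] by simp
  qed
  have cW: "closed W" using oW' by (simp add: closed_open)
  have cW': "closed (- W)" using oW by (simp add: closed_open)
  show ?thesis unfolding XpW XmW using oW oW' cW cW' by auto
qed


end
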